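(* Let $G$ be a connected graph and $C$ the vertex set of a block of $G$ such that $G[C]$ is a cycle. Then every connected forcing set $R$ of $G$ excludes at most one segment of $C$; that is, the set $C\setminus R$ is either empty or consists of cyclically consecutive vertices of the cycle $G[C]$ (it does not contain two disjoint, non-adjacent nonempty segments with vertices of $R$ lying between them on both sides).
   Context: A block is a maximal subgraph with no articulation point. Fix a cyclic orientation of $C$; for $u,v\in C$ the segment $(u\hookrightarrow v)$ is the set of vertices of $C$ strictly between $u$ and $v$ traveling along the cycle from $u$ to $v$ in that orientation. Zero forcing: given a set $S$ of initially colored vertices, if a colored vertex $u$ has exactly one uncolored neighbor $w$, then $w$ becomes colored; $S$ is a zero forcing set if repeated application colors all vertices. A connected forcing set is a zero forcing set $S$ with $G[S]$ connected. *)

theory Defs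
  imports Main
begin

definition simple_graph :: "'a set \<Rightarrow> ('a \<Rightarrow> 'a \<Rightarrow> bool) \<Rightarrow> bool" where
  "simple_graph V E \<longleftrightarrow> finite V \<and> (\<forall>x y. E x y \<longrightarrow> E y x) \<and> (\<forall>x. \<not> E x x)
     \<and> (\<forall>x y. E x y \<longrightarrow> x \<in> V \<and> y \<in> V)"

definition connected_on :: "('a \<Rightarrow> 'a \<Rightarrow> bool) \<Rightarrow> 'a set \<Rightarrow> bool" where
  "connected_on E S \<longleftrightarrow> S \<noteq> {} \<and>
     (\<forall>x\<in>S. \<forall>y\<in>S. (x, y) \<in> {(a, b). a \<in> S \<and> b \<in> S \<and> E a b}\<^sup>*)"

definition no_cut_vertex :: "('a \<Rightarrow> 'a \<Rightarrow> bool) \<Rightarrow> 'a set \<Rightarrow> bool" where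
  "no_cut_vertex E S \<longleftrightarrow> connected_on E S \<and>
     (\<forall>v\<in>S. S - {v} \<noteq> {} \<longrightarrow> connected_on E (S - {v}))"

definition is_block :: "'a set \<Rightarrow> ('a \<Rightarrow> 'a \<Rightarrow> bool) \<Rightarrow> 'a set \<Rightarrow> bool" where
  "is_block V E C \<longleftrightarrow> C \<subseteq> V \<and> no_cut_vertex E C \<and>
     (\<forall>D. C \<subset> D \<and> D \<subseteq> V \<longrightarrow> \<not> no_cut_vertex E D)"

definition cycle_enum :: "('a \<Rightarrow> 'a \<Rightarrow> bool) \<Rightarrow> 'a set \<Rightarrow> (nat \<Rightarrow> 'a) \<Rightarrow> bool" where
  "cycle_enum E C f \<longleftrightarrow> card C \<ge> 3 \<and> bij_betw f {0..<card C} C \<and>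
     (\<forall>x\<in>C. \<forall>y\<in>C. E x y \<longleftrightarrow>
        (\<exists>i<card C. (x = f i \<and> y = f (Suc i mod card C)) \<or> (y = f i \<and> x = f (Suc i mod card C))))"

definition force_step :: "'a set \<Rightarrow> ('a \<Rightarrow> 'a \<Rightarrow> bool) \<Rightarrow> 'a set \<Rightarrow> 'a set \<Rightarrow> bool" where
  "force_step V E S S' \<longleftrightarrow> (\<exists>u w. u \<in> S \<and> w \<in> V - S \<and> E u w \<and>
     (\<forall>x\<in>V. E u x \<and> x \<noteq> w \<longrightarrow> x \<in> S) \<and> S' = insert w S)"

definition zero_forcing_set :: "'a set \<Rightarrow> ('a \<Rightarrow> 'a \<Rightarrow> bool) \<Rightarrow> 'a set \<Rightarrow> bool" where
  "zero_forcing_set V E S \<longleftrightarrow> S \<subseteq> V \<and> (S, V) \<in> {(A, B). force_step V E A B}\<^sup>*"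

definition connected_forcing_set :: "'a set \<Rightarrow> ('a \<Rightarrow> 'a \<Rightarrow> bool) \<Rightarrow> 'a set \<Rightarrow> bool" where
  "connected_forcing_set V E S \<longleftrightarrow> zero_forcing_set V E S \<and> connected_on E S"

end

theory Submission
  imports Defs
begin

fun epath :: "('a \<Rightarrow> 'a \<Rightarrow> bool) \<Rightarrow> 'a list \<Rightarrow> bool" where
  "epath E [] = True"
| "epath E [x] = True"
| "epath E (x # y # xs) = (E x y \<and> epath E (y # xs))"

lemma epath_append:
  "epath E (xs @ ys) \<longleftrightarrow> epath E xs \<and> epath E ys \<and> (xs \<noteq> [] \<and> ys \<noteq> [] \<longrightarrow> E (last xs) (hd ys))"
proof (induction xs)
  case Nil then show ?case by simp
next
  case (Cons a xs) then show ?case by (cases xs; cases ys) auto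
qed

abbreviation irel :: "('a \<Rightarrow> 'a \<Rightarrow> bool) \<Rightarrow> 'a set \<Rightarrow> ('a \<times> 'a) set" where
  "irel E S \<equiv> {(a, b). a \<in> S \<and> b \<in> S \<and> E a b}"

lemma conn_mono: "(x,y) \<in> (irel E A)\<^sup>* \<Longrightarrow> A \<subseteq> B \<Longrightarrow> (x,y) \<in> (irel E B)\<^sup>*"
  using rtrancl_mono[of "irel E A" "irel E B"] by auto

lemma conn_union:
  assumes sym: "\<forall>x y. E x y \<longrightarrow> E y x" and cA: "connected_on E A" and cB: "connected_on E B"
    and a: "a \<in> A" and b: "b \<in> B" and ab: "E a b"
  shows "connected_on E (A \<union> B)"
proof -
  let ?r = "irel E (A \<union> B)"
  have ab': "(a,b) \<in> ?r\<^sup>*" using a b ab by auto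
  have ba': "(b,a) \<in> ?r\<^sup>*" using a b ab sym by auto
  have hA: "(x,y) \<in> ?r\<^sup>*" if "x \<in> A" "y \<in> A" for x y
    using cA that conn_mono[where A=A and B="A \<union> B" and E=E and x=x and y=y] unfolding connected_on_def by blast
  have hB: "(x,y) \<in> ?r\<^sup>*" if "x \<in> B" "y \<in> B" for x y
    using cB that conn_mono[where A=B and B="A \<union> B" and E=E and x=x and y=y] unfolding connected_on_def by blast
  show ?thesis unfolding connected_on_def
  proof (intro conjI ballI)
    show "A \<union> B \<noteq> {}" using a by auto
  next
    fix x y assume x: "x \<in> A \<union> B" and y: "y \<in> A \<union> B"
    show "(x,y) \<in> ?r\<^sup>*"
    proof (cases "x \<in> A")
      case True
      show ?thesis
      proof (cases "y \<in> A")
        case True with \<open>x \<in> A\<close> show ?thesis using hA by blast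
      next
        case False then have "y \<in> B" using y by auto
        then show ?thesis using hA[OF True a] ab' hB[OF b] by (meson rtrancl_trans)
      qed
    next
      case False then have xB: "x \<in> B" using x by auto
      show ?thesis
      proof (cases "y \<in> B")
        case True with xB show ?thesis using hB by blast
      next
        case False then have "y \<in> A" using y by auto
        then show ?thesis using hB[OF xB b] ba' hA[OF a] by (meson rtrancl_trans)
      qed
    qed
  qed
qed

lemma conn_single: "connected_on E {x}"
  by (simp add: connected_on_def)

lemma conn_epath:
  assumes sym: "\<forall>x y. E x y \<longrightarrow> E y x"
  shows "epath E xs \<Longrightarrow> xs \<noteq> [] \<Longrightarrow> connected_on E (set xs)"
proof (induction xs)
  case Nil then show ?case by simp
next
  case (Cons a xs)
  show ?case
  proof (cases xs)
    case Nil then show ?thesis by (simp add: conn_single)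
  next
    case (Cons y ys)
    have e: "E a y" "epath E (y # ys)" using Cons.prems(1) Cons by auto
    have c: "connected_on E (set xs)" using Cons.IH e(2) Cons by auto
    have "set (a # xs) = {a} \<union> set xs" by auto
    have "connected_on E ({a} \<union> set xs)" using conn_union[OF sym conn_single[of E a] c, where a=a and b=y] e(1) Cons by auto
    then show ?thesis by simp
  qed
qed

lemma block_lemma:
  assumes sg: "simple_graph V E" and blk: "is_block V E C" and c3: "card C \<ge> 3"
    and c: "c \<in> C" and z: "z \<in> C" and cz: "c \<noteq> z"
    and ne: "ys \<noteq> []" and d: "distinct ys" and ep: "epath E ys"
    and dj: "set ys \<inter> C = {}" and sV: "set ys \<subseteq> V"
    and e1: "E c (hd ys)" and e2: "E (last ys) z"
  shows False
proof -
  have sym: "\<forall>x y. E x y \<longrightarrow> E y x" using sg unfolding simple_graph_def by blast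
  have CV: "C \<subseteq> V" and nc: "no_cut_vertex E C"
    and maxi: "\<And>D. C \<subset> D \<Longrightarrow> D \<subseteq> V \<Longrightarrow> \<not> no_cut_vertex E D"
    using blk unfolding is_block_def by auto
  have cC: "connected_on E C" using nc unfolding no_cut_vertex_def by auto
  have cCv: "connected_on E (C - {v})" if "v \<in> C" for v
  proof -
    have "finite C" using CV sg unfolding simple_graph_def using finite_subset by blast
    have "C - {v} \<noteq> {}"
    proof
      assume "C - {v} = {}"
      then have "C \<subseteq> {v}" by auto
      then have "card C \<le> card {v}" by (intro card_mono) auto
      then show False using c3 by simp
    qed
    then show ?thesis using nc that unfolding no_cut_vertex_def by auto
  qed
  have cY: "connected_on E (set ys)" using conn_epath[OF sym ep ne] .
  have hdy: "hd ys \<in> set ys" "last ys \<in> set ys" using ne by auto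
  define D where "D = C \<union> set ys"
  have "C \<subset> D" using D_def dj ne by (auto simp: neq_Nil_conv)
  moreover have "D \<subseteq> V" using D_def CV sV by auto
  moreover have "no_cut_vertex E D"
    unfolding no_cut_vertex_def
  proof (intro conjI ballI impI)
    show "connected_on E D" unfolding D_def using conn_union[OF sym cC cY c hdy(1) e1] .
  next
    fix v assume v: "v \<in> D" and "D - {v} \<noteq> {}"
    show "connected_on E (D - {v})"
    proof (cases "v \<in> C")
      case True
      then have eq: "D - {v} = (C - {v}) \<union> set ys" using D_def dj by auto
      show ?thesis
      proof (cases "v = c")
        case False
        then show ?thesis unfolding eq using conn_union[OF sym cCv[OF True] cY _ hdy(1) e1] c by auto
      next
        case True
        then have "z \<in> C - {v}" using z cz by auto
        then show ?thesis unfolding eq using conn_union[OF sym cCv[OF \<open>v \<in> C\<close>] cY _ hdy(2)] e2 sym by auto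
      qed
    next
      case False
      then have vy: "v \<in> set ys" using v D_def by auto
      then obtain as bs where ysd: "ys = as @ v # bs" by (meson split_list)
      have nv: "v \<notin> set as" "v \<notin> set bs" using d ysd by auto
      have eq: "D - {v} = (C \<union> set as) \<union> set bs" using D_def ysd nv False by auto
      have epa: "epath E as" and epb: "epath E bs"
        using ep ysd epath_append[of E as "v # bs"] epath_append[of E "[v]" bs] by auto
      have cM: "connected_on E (C \<union> set as)"
      proof (cases "as = []")
        case True then show ?thesis using cC by simp
      next
        case False
        have h: "hd as = hd ys" using False ysd by simp
        have "hd as \<in> set as" using False by simp
        moreover have "E c (hd as)" using h e1 by simp
        ultimately show ?thesis using conn_union[OF sym cC conn_epath[OF sym epa False] c] by blast
      qed
      show ?thesis
      proof (cases "bs = []")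
        case True then show ?thesis using cM eq by simp
      next
        case False
        have "last bs = last ys" using False ysd by simp
        then have "E z (last bs)" using e2 sym by auto
        moreover have "last bs \<in> set bs" using False by simp
        moreover have "z \<in> C \<union> set as" using z by simp
        ultimately show ?thesis unfolding eq using conn_union[OF sym cM conn_epath[OF sym epb False]] by blast
      qed
    qed
  qed
  ultimately show False using maxi by blast
qed

lemma partA:
  assumes sg: "simple_graph V E" and blk: "is_block V E C" and c3: "card C \<ge> 3"
    and x: "x \<in> R \<inter> C" and p: "(x,y) \<in> (irel E R)\<^sup>*"
  shows "(y \<in> C \<longrightarrow> (x,y) \<in> (irel E (R \<inter> C))\<^sup>*) \<and>
         (y \<notin> C \<longrightarrow> (\<exists>c\<in>R \<inter> C. (x,c) \<in> (irel E (R \<inter> C))\<^sup>* \<and>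
            (\<exists>ys. ys \<noteq> [] \<and> distinct ys \<and> epath E ys \<and> set ys \<inter> C = {} \<and> set ys \<subseteq> V
                 \<and> E c (hd ys) \<and> last ys = y)))"
  using p
proof (induction rule: rtrancl_induct)
  case base then show ?case using x by auto
next
  case (step y z)
  have yz: "y \<in> R" "z \<in> R" "E y z" using step.hyps(2) by auto
  have zV: "z \<in> V" using sg yz(3) unfolding simple_graph_def by blast
  show ?case
  proof (cases "y \<in> C")
    case yC: True
    then have xy: "(x,y) \<in> (irel E (R \<inter> C))\<^sup>*" using step.IH by blast
    show ?thesis
    proof (cases "z \<in> C")
      case True
      then have "(y,z) \<in> irel E (R \<inter> C)" using yz yC by auto
      then show ?thesis using xy True by (meson rtrancl.rtrancl_into_rtrancl)
    next
      case False
      have "[z] \<noteq> [] \<and> distinct [z] \<and> epath E [z] \<and> set [z] \<inter> C = {} \<and> set [z] \<subseteq> V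
                 \<and> E y (hd [z]) \<and> last [z] = z" using False zV yz by auto
      then show ?thesis using False xy yC yz by blast
    qed
  next
    case yC: False
    then obtain c ys where c: "c \<in> R \<inter> C" "(x,c) \<in> (irel E (R \<inter> C))\<^sup>*"
      and ys: "ys \<noteq> []" "distinct ys" "epath E ys" "set ys \<inter> C = {}" "set ys \<subseteq> V"
        "E c (hd ys)" "last ys = y"
      using step.IH by blast
    show ?thesis
    proof (cases "z \<in> C")
      case True
      have "z = c"
      proof (rule ccontr)
        assume "z \<noteq> c"
        then show False using block_lemma[OF sg blk c3 _ True _ ys(1-6)] c ys(7) yz(3) by auto
      qed
      then show ?thesis using c True by auto
    next
      case zC: False
      show ?thesis
      proof (cases "z \<in> set ys")
        case True
        then obtain as bs where ysd: "ys = as @ z # bs" by (meson split_list)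
        let ?zs = "as @ [z]"
        have "epath E ?zs" using ys(3) ysd epath_append[of E as "z # bs"] epath_append[of E as "[z]"] by auto
        moreover have "distinct ?zs" using ys(2) ysd by auto
        moreover have "hd ?zs = hd ys" using ysd by (cases as) auto
        moreover have "set ?zs \<inter> C = {}" "set ?zs \<subseteq> V" using ys(4,5) ysd by auto
        ultimately have P: "?zs \<noteq> [] \<and> distinct ?zs \<and> epath E ?zs \<and> set ?zs \<inter> C = {} \<and> set ?zs \<subseteq> V
                 \<and> E c (hd ?zs) \<and> last ?zs = z" using ys(6) by simp
        show ?thesis using zC c P by blast
      next
        case False
        let ?zs = "ys @ [z]"
        have "epath E ?zs" using ys(3,7) yz(3) ys(1) epath_append[of E ys "[z]"] by auto
        moreover have "distinct ?zs" using ys(2) False by auto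
        moreover have "hd ?zs = hd ys" using ys(1) by simp
        moreover have "set ?zs \<inter> C = {}" "set ?zs \<subseteq> V" using ys(4,5) zC zV by auto
        ultimately have P: "?zs \<noteq> [] \<and> distinct ?zs \<and> epath E ?zs \<and> set ?zs \<inter> C = {} \<and> set ?zs \<subseteq> V
                 \<and> E c (hd ?zs) \<and> last ?zs = z" using ys(6) by simp
        show ?thesis using zC c P by blast
      qed
    qed
  qed
qed

lemma S_connected:
  assumes sg: "simple_graph V E" and blk: "is_block V E C" and c3: "card C \<ge> 3"
    and cR: "connected_on E R" and ne: "R \<inter> C \<noteq> {}"
  shows "connected_on E (R \<inter> C)"
  unfolding connected_on_def
proof (intro conjI ballI)
  show "R \<inter> C \<noteq> {}" by fact
next
  fix x y assume x: "x \<in> R \<inter> C" and y: "y \<in> R \<inter> C"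
  then have "(x,y) \<in> (irel E R)\<^sup>*" using cR unfolding connected_on_def by blast
  then show "(x,y) \<in> (irel E (R \<inter> C))\<^sup>*" using partA[OF sg blk c3 x] y by blast
qed

lemma mod2: "(m::nat) < 2*n \<Longrightarrow> m mod n = (if m < n then m else m - n)"
  by (simp add: le_mod_geq)

lemma rot_enum:
  assumes ce: "cycle_enum E C f" and i: "i < card C"
  shows "cycle_enum E C (\<lambda>j. f ((i+j) mod card C))"
proof -
  let ?n = "card C"
  let ?r = "\<lambda>j. (i+j) mod ?n"
  have n3: "?n \<ge> 3" and bf: "bij_betw f {0..<?n} C"
    and ed: "\<forall>x\<in>C. \<forall>y\<in>C. E x y \<longleftrightarrow>
        (\<exists>i<?n. (x = f i \<and> y = f (Suc i mod ?n)) \<or> (y = f i \<and> x = f (Suc i mod ?n)))"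
    using ce unfolding cycle_enum_def by auto
  have inj: "inj_on ?r {0..<?n}"
  proof (rule inj_onI)
    fix a b assume a: "a \<in> {0..<?n}" and b: "b \<in> {0..<?n}" and e: "?r a = ?r b"
    have "i + a < 2 * ?n" "i + b < 2 * ?n" using a b i by auto
    then show "a = b" using e mod2[of "i+a" ?n] mod2[of "i+b" ?n] a b i
      by (auto split: if_splits)
  qed
  have img: "?r ` {0..<?n} = {0..<?n}"
    by (rule endo_inj_surj) (use inj n3 in auto)
  have br: "bij_betw ?r {0..<?n} {0..<?n}" using inj img by (simp add: bij_betw_def)
  have bg: "bij_betw (\<lambda>j. f ((i+j) mod ?n)) {0..<?n} C"
    using bij_betw_trans[OF br bf] by (simp add: o_def)
  have suc: "(i + Suc j mod ?n) mod ?n = Suc ((i+j) mod ?n) mod ?n" for j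
    by (simp add: mod_add_right_eq mod_Suc_eq)
  have ex: "(\<exists>j<?n. P (?r j)) \<longleftrightarrow> (\<exists>i'<?n. P i')" for P
  proof
    assume "\<exists>j<?n. P (?r j)"
    then obtain j where "P (?r j)" by auto
    moreover have "?r j < ?n" using n3 by simp
    ultimately show "\<exists>i'<?n. P i'" by blast
  next
    assume "\<exists>i'<?n. P i'"
    then obtain i' where "i' < ?n" "P i'" by auto
    then have "i' \<in> ?r ` {0..<?n}" using img by auto
    then show "\<exists>j<?n. P (?r j)" using \<open>P i'\<close> by auto
  qed
  have eq: "\<forall>x\<in>C. \<forall>y\<in>C. E x y \<longleftrightarrow>
        (\<exists>j<?n. (x = f (?r j) \<and> y = f ((i + Suc j mod ?n) mod ?n)) \<or>
                 (y = f (?r j) \<and> x = f ((i + Suc j mod ?n) mod ?n)))"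
  proof (intro ballI)
    fix x y assume x: "x \<in> C" and y: "y \<in> C"
    have "E x y \<longleftrightarrow> (\<exists>i'<?n. (x = f i' \<and> y = f (Suc i' mod ?n)) \<or> (y = f i' \<and> x = f (Suc i' mod ?n)))"
      using ed x y by blast
    also have "\<dots> \<longleftrightarrow> (\<exists>j<?n. (x = f (?r j) \<and> y = f (Suc (?r j) mod ?n)) \<or> (y = f (?r j) \<and> x = f (Suc (?r j) mod ?n)))"
      by (rule ex[symmetric])
    finally show "E x y \<longleftrightarrow>
        (\<exists>j<?n. (x = f (?r j) \<and> y = f ((i + Suc j mod ?n) mod ?n)) \<or>
                 (y = f (?r j) \<and> x = f ((i + Suc j mod ?n) mod ?n)))" by (simp only: suc)
  qed
  show ?thesis unfolding cycle_enum_def using n3 bg eq by blast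
qed

lemma cyc_main:
  assumes ce: "cycle_enum E C g" and S: "S \<subseteq> C" and cS: "connected_on E S"
    and g0: "g 0 \<notin> S" and gl: "g (card C - 1) \<in> S"
  shows "\<exists>k \<le> card C. C - S = g ` {0..<k}"
proof -
  let ?n = "card C"
  have n3: "?n \<ge> 3" and bg: "bij_betw g {0..<?n} C"
    and ed: "\<forall>x\<in>C. \<forall>y\<in>C. E x y \<longleftrightarrow>
        (\<exists>i<?n. (x = g i \<and> y = g (Suc i mod ?n)) \<or> (y = g i \<and> x = g (Suc i mod ?n)))"
    using ce unfolding cycle_enum_def by auto
  have inj: "\<And>a b. a < ?n \<Longrightarrow> b < ?n \<Longrightarrow> g a = g b \<Longrightarrow> a = b"
    using bg unfolding bij_betw_def inj_on_def by auto
  have img: "g ` {0..<?n} = C" using bg unfolding bij_betw_def by auto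
  define k where "k = (LEAST j. j < ?n \<and> g j \<in> S)"
  have "?n - 1 < ?n \<and> g (?n - 1) \<in> S" using gl n3 by auto
  then have kK: "k < ?n \<and> g k \<in> S" unfolding k_def by (rule LeastI)
  have kmin: "g j \<notin> S" if "j < k" for j
    using not_less_Least[of j "\<lambda>j. j < ?n \<and> g j \<in> S"] that kK unfolding k_def by auto
  have "C - S = g ` {0..<k}"
  proof
    show "g ` {0..<k} \<subseteq> C - S" using kmin kK img by auto
  next
    show "C - S \<subseteq> g ` {0..<k}"
    proof
      fix x assume x: "x \<in> C - S"
      then have "x \<in> g ` {0..<?n}" using img by auto
      then obtain m where m: "m < ?n" "x = g m" by auto
      show "x \<in> g ` {0..<k}"
      proof (rule ccontr)
        assume "x \<notin> g ` {0..<k}"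
        then have "\<not> m < k" using m by auto
        moreover have "m \<noteq> k" using kK m x by auto
        moreover have "m \<noteq> ?n - 1" using gl m x by auto
        ultimately have km: "k < m" "m < ?n - 1" using m by auto
        have k0: "0 < k" using kK g0 by (cases k) auto
        have gmS: "g m \<notin> S" using m x by auto
        have "(g k, g (?n - 1)) \<in> (irel E S)\<^sup>*" using cS kK gl unfolding connected_on_def by blast
        then have "\<exists>j. 0 < j \<and> j < m \<and> g (?n - 1) = g j"
        proof (induction rule: rtrancl_induct)
          case base then show ?case using k0 km by auto
        next
          case (step y y')
          then obtain j where j: "0 < j" "j < m" "y = g j" by auto
          have y': "y' \<in> S" "E y y'" "y \<in> S" using step.hyps(2) by auto
          then have "y' \<in> C" using S by auto
          then have "y' \<in> g ` {0..<?n}" using img by auto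
          then obtain j' where j': "j' < ?n" "y' = g j'" by auto
          have "y \<in> C" using y' S by auto
          then obtain i' where i': "i' < ?n"
            "(y = g i' \<and> y' = g (Suc i' mod ?n)) \<or> (y' = g i' \<and> y = g (Suc i' mod ?n))"
            using ed \<open>y' \<in> C\<close> y'(2) by blast
          have smod: "Suc i' mod ?n < ?n" using n3 by auto
          from i'(2) show ?case
          proof
            assume h: "y = g i' \<and> y' = g (Suc i' mod ?n)"
            then have "j = i'" using inj j i' km by auto
            moreover have "Suc j < ?n" using j km by auto
            ultimately have "j' = Suc j" using inj[OF j'(1) smod] h j' by auto
            moreover have "j' \<noteq> m" using gmS y' j' by auto
            ultimately show ?case using j j' by (intro exI[of _ j']) auto
          next
            assume h: "y' = g i' \<and> y = g (Suc i' mod ?n)"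
            then have ji: "j' = i'" using inj j' i' by auto
            have jj: "j = Suc i' mod ?n" using inj[OF _ smod] h j km by auto
            show ?thesis
            proof (cases "Suc i' < ?n")
              case True
              then have "j = Suc j'" using jj ji by auto
              moreover have "j' \<noteq> 0" using g0 y' j' by (metis gr0I)
              ultimately show ?thesis using j j' by (intro exI[of _ j']) auto
            next
              case False
              then have "Suc i' = ?n" using i' by auto
              then show ?thesis using jj j by auto
            qed
          qed
        qed
        then obtain j where "j < m" "g (?n - 1) = g j" by auto
        moreover have "j < ?n" "?n - 1 < ?n" using km \<open>j < m\<close> by auto
        ultimately have "?n - 1 = j" by (intro inj) auto
        then show False using km \<open>j < m\<close> by linarith
      qed
    qed
  qed
  moreover have "k \<le> ?n" using kK by simp
  ultimately show ?thesis by blast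
qed

theorem lemma3:
  fixes V C R :: "'a set" and E :: "'a \<Rightarrow> 'a \<Rightarrow> bool" and f :: "nat \<Rightarrow> 'a"
  assumes "simple_graph V E"
    and "connected_on E V"
    and "is_block V E C"
    and "cycle_enum E C f"
    and "connected_forcing_set V E R"
  shows "C - R = {} \<or>
         (\<exists>i k. k \<le> card C \<and> C - R = {f ((i + j) mod card C) | j. j < k})"
proof -
  note sg = assms(1) and blk = assms(3) and ce = assms(4)
  let ?n = "card C"
  let ?S = "R \<inter> C"
  have n3: "?n \<ge> 3" and bf: "bij_betw f {0..<?n} C" using ce unfolding cycle_enum_def by auto
  have img: "f ` {0..<?n} = C" using bf unfolding bij_betw_def by auto
  have cR: "connected_on E R" using assms(5) unfolding connected_forcing_set_def by auto
  have CR: "C - R = C - ?S" by auto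
  show ?thesis
  proof (cases "?S = {}")
    case True
    have "{f ((0 + j) mod ?n) | j. j < ?n} = f ` {0..<?n}"
      apply auto
      subgoal for x by (intro exI[of _ x]) simp
      done
    then have "C - R = {f ((0 + j) mod ?n) | j. j < ?n}" using True img by auto
    then show ?thesis by blast
  next
    case Sne: False
    show ?thesis
    proof (cases "?S = C")
      case True then show ?thesis by auto
    next
      case SC: False
      have cS: "connected_on E ?S" using S_connected[OF sg blk n3 cR Sne] .
      obtain a where a: "a < ?n" "f a \<notin> ?S"
      proof -
        obtain x where "x \<in> C" "x \<notin> ?S" using SC by auto
        moreover then have "x \<in> f ` {0..<?n}" using img by auto
        ultimately show ?thesis using that by auto
      qed
      obtain b where b: "b < ?n" "f b \<in> ?S"
      proof -
        obtain x where "x \<in> ?S" using Sne by auto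
        moreover then have "x \<in> f ` {0..<?n}" using img by auto
        ultimately show ?thesis using that by auto
      qed
      have predj: "(Suc j mod ?n + ?n - 1) mod ?n = j" if "j < ?n" for j
      proof (cases "Suc j < ?n")
        case True
        then have "Suc j mod ?n + ?n - 1 = j + ?n" by simp
        then show ?thesis using that by simp
      next
        case False
        then have "Suc j = ?n" using that by auto
        then show ?thesis using that by simp
      qed
      have "\<exists>i<?n. f i \<notin> ?S \<and> f ((i + ?n - 1) mod ?n) \<in> ?S"
      proof (rule ccontr)
        assume H: "\<not> (\<exists>i<?n. f i \<notin> ?S \<and> f ((i + ?n - 1) mod ?n) \<in> ?S)"
        have all: "f ((b + m) mod ?n) \<in> ?S" for m
        proof (induction m)
          case 0 then show ?case using b by simp
        next
          case (Suc m)
          let ?j = "(b + m) mod ?n"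
          have jn: "?j < ?n" using n3 by simp
          have "Suc ?j mod ?n < ?n" using n3 by simp
          then have "\<not> (f (Suc ?j mod ?n) \<notin> ?S \<and> f ((Suc ?j mod ?n + ?n - 1) mod ?n) \<in> ?S)"
            using H by blast
          then have "f (Suc ?j mod ?n) \<in> ?S" unfolding predj[OF jn] using Suc.IH by blast
          moreover have "Suc ?j mod ?n = (b + Suc m) mod ?n" by (simp add: mod_Suc_eq)
          ultimately show ?case by simp
        qed
        have "(b + (a + ?n - b)) mod ?n = a" using a b by simp
        then show False using all[of "a + ?n - b"] a by simp
      qed
      then obtain i where i: "i < ?n" "f i \<notin> ?S" "f ((i + ?n - 1) mod ?n) \<in> ?S" by blast
      let ?g = "\<lambda>j. f ((i + j) mod ?n)"
      have ceg: "cycle_enum E C ?g" using rot_enum[OF ce i(1)] .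
      have g0: "?g 0 \<notin> ?S" using i by simp
      have "i + (?n - 1) = i + ?n - 1" using n3 by simp
      then have gl: "?g (?n - 1) \<in> ?S" using i by simp
      obtain k where k: "k \<le> ?n" "C - ?S = ?g ` {0..<k}"
        using cyc_main[OF ceg _ cS g0 gl] by blast
      have "?g ` {0..<k} = {f ((i + j) mod ?n) | j. j < k}" by auto
      then have "C - R = {f ((i + j) mod ?n) | j. j < k}" using k CR by simp
      then show ?thesis using k by blast
    qed
  qed
qed

end
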